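(* Let $G$ and $H$ be graphs, each with at least two vertices. (1) If $n_1,n_2\ge1$ and $r_1,r_2\in(0,1)$ with $r_1^2+r_2^2=1$ are such that $G$ admits a spherical embedding of dimension $n_1$ and radius $r_1$ and $H$ admits a spherical embedding of dimension $n_2$ and radius $r_2$, then $G+H$ has a unit-distance embedding in $\mathbb{R}^{n_1+n_2}$. (2) Conversely, if $G+H$ has a unit-distance embedding in $\mathbb{R}^n$, then there exist $n_1,n_2\ge1$ with $n_1+n_2=n$ and $r_1,r_2\in(0,1)$ with $r_1^2+r_2^2=1$ such that $G$ admits a spherical embedding of dimension $n_1$ and radius $r_1$ and $H$ admits a spherical embedding of dimension $n_2$ and radius $r_2$.
   Context: All graphs are finite and simple. A unit-distance embedding of a graph $G$ in $\mathbb{R}^n$ is an injective map $f$ from the vertex set of $G$ to $\mathbb{R}^n$ such that $|f(u)-f(v)|=1$ for every edge $uv$ and no point $f(w)$ lies on the segment $[f(u),f(v)]$ for an edge $uv$ with $w\notin\{u,v\}$ (edges may cross one another). $G$ admits a spherical embedding of dimension $k$ and radius $r$ if $G$ has a unit-distance embedding in $\mathbb{R}^k$ all of whose vertices lie on a sphere $\{x\in\mathbb{R}^k:|x-c|=r\}$. The sum $G+H$ is obtained from disjoint copies of $G$ and $H$ by adding all edges between a vertex of $G$ and a vertex of $H$. *)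

theory Defs
  imports Complex_Main
begin

definition simple_graph :: "'v set \<Rightarrow> ('v \<Rightarrow> 'v \<Rightarrow> bool) \<Rightarrow> bool" where
  "simple_graph V E \<longleftrightarrow> finite V \<and>
     (\<forall>u v. E u v \<longrightarrow> u \<in> V \<and> v \<in> V \<and> u \<noteq> v \<and> E v u)"

text \<open>Points of R^n are represented as functions nat => real vanishing at
all coordinates i >= n.\<close>
definition Rn :: "nat \<Rightarrow> (nat \<Rightarrow> real) set" where
  "Rn n = {x. \<forall>i\<ge>n. x i = 0}"

definition edist :: "nat \<Rightarrow> (nat \<Rightarrow> real) \<Rightarrow> (nat \<Rightarrow> real) \<Rightarrow> real" where
  "edist n x y = sqrt (\<Sum>i<n. (x i - y i)^2)"

definition seg :: "(nat \<Rightarrow> real) \<Rightarrow> (nat \<Rightarrow> real) \<Rightarrow> (nat \<Rightarrow> real) set" where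
  "seg a b = {x. \<exists>t::real. 0 \<le> t \<and> t \<le> 1 \<and> x = (\<lambda>i. (1 - t) * a i + t * b i)}"

definition unit_distance_embedding ::
  "nat \<Rightarrow> 'v set \<Rightarrow> ('v \<Rightarrow> 'v \<Rightarrow> bool) \<Rightarrow> ('v \<Rightarrow> nat \<Rightarrow> real) \<Rightarrow> bool" where
  "unit_distance_embedding n V E f \<longleftrightarrow>
     (\<forall>v\<in>V. f v \<in> Rn n) \<and> inj_on f V \<and>
     (\<forall>u v. E u v \<longrightarrow> edist n (f u) (f v) = 1) \<and>
     (\<forall>u v w. E u v \<and> w \<in> V \<and> w \<noteq> u \<and> w \<noteq> v \<longrightarrow> f w \<notin> seg (f u) (f v))"

definition spherical_embedding ::
  "nat \<Rightarrow> real \<Rightarrow> 'v set \<Rightarrow> ('v \<Rightarrow> 'v \<Rightarrow> bool) \<Rightarrow> bool" where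
  "spherical_embedding k r V E \<longleftrightarrow>
     (\<exists>f c. unit_distance_embedding k V E f \<and> c \<in> Rn k \<and>
            (\<forall>v\<in>V. edist k (f v) c = r))"

text \<open>The sum (join) G + H on the disjoint union 'a + 'b.\<close>
definition gsum_V :: "'a set \<Rightarrow> 'b set \<Rightarrow> ('a + 'b) set" where
  "gsum_V VG VH = Inl ` VG \<union> Inr ` VH"

fun gsum_E :: "'a set \<Rightarrow> 'b set \<Rightarrow> ('a \<Rightarrow> 'a \<Rightarrow> bool) \<Rightarrow> ('b \<Rightarrow> 'b \<Rightarrow> bool)
    \<Rightarrow> 'a + 'b \<Rightarrow> 'a + 'b \<Rightarrow> bool" where
  "gsum_E VG VH EG EH (Inl a) (Inl b) = EG a b"
| "gsum_E VG VH EG EH (Inr a) (Inr b) = EH a b"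
| "gsum_E VG VH EG EH (Inl a) (Inr b) = (a \<in> VG \<and> b \<in> VH)"
| "gsum_E VG VH EG EH (Inr b) (Inl a) = (a \<in> VG \<and> b \<in> VH)"

end

theory Submission
  imports Defs
begin


definition ip :: "nat \<Rightarrow> (nat \<Rightarrow> real) \<Rightarrow> (nat \<Rightarrow> real) \<Rightarrow> real" where
  "ip n x y = (\<Sum>i<n. x i * y i)"

definition orthonormal :: "nat \<Rightarrow> (nat \<Rightarrow> real) list \<Rightarrow> bool" where
  "orthonormal n bs \<longleftrightarrow> (\<forall>j<length bs. \<forall>k<length bs. ip n (bs!j) (bs!k) = (if j = k then 1 else 0))"

definition inspan :: "nat \<Rightarrow> (nat \<Rightarrow> real) list \<Rightarrow> (nat \<Rightarrow> real) \<Rightarrow> bool" where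
  "inspan n bs v \<longleftrightarrow> (\<forall>i<n. v i = (\<Sum>j<length bs. ip n v (bs!j) * (bs!j) i))"

definition orth :: "nat \<Rightarrow> (nat \<Rightarrow> real) list \<Rightarrow> (nat \<Rightarrow> real) \<Rightarrow> bool" where
  "orth n bs z \<longleftrightarrow> (\<forall>j<length bs. ip n z (bs!j) = 0)"

lemma ip_comm: "ip n x y = ip n y x"
  unfolding ip_def by (simp add: mult.commute)

lemma ip_cong: "(\<And>i. i < n \<Longrightarrow> p i = p' i) \<Longrightarrow> ip n p w = ip n p' w"
  unfolding ip_def by (rule sum.cong) auto

lemma ip_lin: "ip n (\<lambda>i. a * p i + b * q i) w = a * ip n p w + b * ip n q w"
  unfolding ip_def by (simp add: sum.distrib sum_distrib_left distrib_right mult.assoc)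

lemma ip_diff: "ip n (\<lambda>i. p i - q i) w = ip n p w - ip n q w"
  unfolding ip_def by (simp add: sum_subtractf algebra_simps)

lemma ip_sum: "ip n (\<lambda>i. \<Sum>j<L. c j * B j i) w = (\<Sum>j<L. c j * ip n (B j) w)"
  unfolding ip_def sum_distrib_left sum_distrib_right
  by (subst sum.swap) (simp add: mult.assoc)

lemma ip_self_nonneg: "ip n x x \<ge> 0"
  unfolding ip_def by (simp add: sum_nonneg)

lemma ip_self_zero: "ip n x x = 0 \<Longrightarrow> i < n \<Longrightarrow> x i = 0"
  unfolding ip_def by (subst (asm) sum_nonneg_eq_0_iff) auto

lemma ip_span:
  assumes "inspan n bs v"
  shows "ip n v u = (\<Sum>j<length bs. ip n v (bs!j) * ip n (bs!j) u)"
proof -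
  have "ip n v u = ip n (\<lambda>i. \<Sum>j<length bs. ip n v (bs!j) * (bs!j) i) u"
    using assms unfolding inspan_def by (intro ip_cong) auto
  also have "\<dots> = (\<Sum>j<length bs. ip n v (bs!j) * ip n (bs!j) u)"
    by (rule ip_sum)
  finally show ?thesis .
qed

lemma parseval:
  assumes "inspan n bs v"
  shows "ip n v v = (\<Sum>j<length bs. (ip n v (bs!j))^2)"
proof -
  have "ip n v v = (\<Sum>j<length bs. ip n v (bs!j) * ip n (bs!j) v)" by (rule ip_span[OF assms])
  also have "\<dots> = (\<Sum>j<length bs. (ip n v (bs!j))^2)"
    by (intro sum.cong refl) (metis ip_comm power2_eq_square)
  finally show ?thesis .
qed

lemma sum_split_nat: "(\<Sum>j<a+(b::nat). f j) = (\<Sum>j<a. f j) + (\<Sum>j<b. f (a + j)::real)"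
  by (induction b) (auto simp: add.assoc)

lemma inspan_mono:
  assumes "inspan n bs v" "orthonormal n (bs @ cs)"
  shows "inspan n (bs @ cs) v"
  unfolding inspan_def
proof (intro allI impI)
  fix i assume i: "i < n"
  have z: "ip n v (cs!k) = 0" if "k < length cs" for k
  proof -
    have "ip n v (cs!k) = (\<Sum>j<length bs. ip n v (bs!j) * ip n (bs!j) (cs!k))"
      by (rule ip_span[OF assms(1)])
    also have "\<dots> = 0"
    proof (rule sum.neutral, intro ballI)
      fix j assume "j \<in> {..<length bs}"
      have jl: "j < length bs" using \<open>j \<in> _\<close> by simp
      have "ip n ((bs@cs)!j) ((bs@cs)!(length bs + k)) = 0"
        using assms(2) that jl unfolding orthonormal_def
        by (metis add_less_cancel_left less_add_eq_less not_add_less1 length_append trans_less_add1)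
      then show "ip n v (bs!j) * ip n (bs!j) (cs!k) = 0"
        using \<open>j \<in> _\<close> by (simp add: nth_append)
    qed
    finally show ?thesis .
  qed
  have "(\<Sum>j<length (bs@cs). ip n v ((bs@cs)!j) * ((bs@cs)!j) i)
      = (\<Sum>j<length bs. ip n v (bs!j) * (bs!j) i)"
    by (simp add: sum_split_nat nth_append z)
  then show "v i = (\<Sum>j<length (bs@cs). ip n v ((bs@cs)!j) * ((bs@cs)!j) i)"
    using assms(1) i unfolding inspan_def by simp
qed

lemma inspan_lin:
  assumes "inspan n bs p" "inspan n bs q"
  shows "inspan n bs (\<lambda>i. a * p i + b * q i)"
  unfolding inspan_def
proof (intro allI impI)
  fix i assume i: "i < n"
  have "a * p i + b * q i = a * (\<Sum>j<length bs. ip n p (bs!j) * (bs!j) i) + b * (\<Sum>j<length bs. ip n q (bs!j) * (bs!j) i)"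
    using assms i unfolding inspan_def by simp
  also have "\<dots> = (\<Sum>j<length bs. ip n (\<lambda>i. a * p i + b * q i) (bs!j) * (bs!j) i)"
    by (simp add: ip_lin sum_distrib_left sum.distrib algebra_simps)
  finally show "a * p i + b * q i = (\<Sum>j<length bs. ip n (\<lambda>i. a * p i + b * q i) (bs!j) * (bs!j) i)" .
qed

lemma inspan_cong:
  assumes "inspan n bs p" "\<And>i. i < n \<Longrightarrow> q i = p i"
  shows "inspan n bs q"
  using assms unfolding inspan_def
  by (metis (no_types, lifting) ip_cong sum.cong)

lemma inspan_zero:
  assumes "inspan n bs z" "\<And>j. j < length bs \<Longrightarrow> ip n z (bs!j) = 0" "i < n"
  shows "z i = 0"
  using assms unfolding inspan_def by simp

lemma ip_scale: "ip n (\<lambda>i. a * p i) w = a * ip n p w"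
  unfolding ip_def by (simp add: sum_distrib_left algebra_simps)

lemma gs_step:
  assumes on: "orthonormal n bs"
  shows "\<exists>cs. orthonormal n (bs@cs) \<and> inspan n (bs@cs) v \<and>
           (\<forall>z. ip n z v = 0 \<longrightarrow> orth n bs z \<longrightarrow> orth n (bs@cs) z)"
proof -
  define L where "L = length bs"
  define c where "c j = ip n v (bs!j)" for j
  define r where "r = (\<lambda>i. v i - (\<Sum>j<L. c j * (bs!j) i))"
  have ipr: "ip n r w = ip n v w - (\<Sum>j<L. c j * ip n (bs!j) w)" for w
    unfolding r_def by (simp add: ip_diff ip_sum)
  have rb: "ip n r (bs!k) = 0" if "k < L" for k
  proof -
    have "(\<Sum>j<L. c j * ip n (bs!j) (bs!k)) = (\<Sum>j<L. if j = k then c j else 0)"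
      using on that unfolding orthonormal_def L_def by (intro sum.cong) auto
    also have "\<dots> = c k" using that by simp
    finally show ?thesis using ipr[of "bs!k"] unfolding c_def by simp
  qed
  show ?thesis
  proof (cases "ip n r r = 0")
    case True
    have "inspan n bs v" unfolding inspan_def
    proof (intro allI impI)
      fix i assume "i < n"
      then have "r i = 0" using ip_self_zero[OF True] by simp
      then show "v i = (\<Sum>j<length bs. ip n v (bs!j) * (bs!j) i)"
        unfolding r_def c_def L_def by simp
    qed
    then show ?thesis using on by (intro exI[of _ "[]"]) simp
  next
    case False
    define s where "s = sqrt (ip n r r)"
    have s0: "s > 0" using False ip_self_nonneg[of n r] unfolding s_def by simp
    have ss: "s * s = ip n r r" unfolding s_def using ip_self_nonneg[of n r] by simp
    define b where "b = (\<lambda>i. (1/s) * r i)"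
    have ipb: "ip n b w = (1/s) * ip n r w" for w unfolding b_def by (rule ip_scale)
    have bbk: "ip n (bs!k) b = 0" if "k < L" for k
      using rb[OF that] ip_comm[of n "bs!k" b] ipb[of "bs!k"] by simp
    have rr: "ip n (bs!j) r = 0" if "j < L" for j using rb[OF that] by (simp add: ip_comm)
    have bb: "ip n b b = 1"
    proof -
      have "ip n b b = (1/s) * ip n r b" by (rule ipb)
      also have "ip n r b = ip n b r" by (rule ip_comm)
      also have "\<dots> = (1/s) * ip n r r" by (rule ipb)
      finally show ?thesis using s0 ss False by (simp add: field_simps)
    qed
    have on2: "orthonormal n (bs@[b])"
      unfolding orthonormal_def
    proof (intro allI impI)
      fix j k assume j: "j < length (bs@[b])" and k: "k < length (bs@[b])"
      show "ip n ((bs@[b])!j) ((bs@[b])!k) = (if j = k then 1 else 0)"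
      proof (cases "j < L")
        case jl: True
        show ?thesis
        proof (cases "k < L")
          case True then show ?thesis using on jl unfolding orthonormal_def L_def by (simp add: nth_append)
        next
          case False then have "k = L" using k unfolding L_def by simp
          then show ?thesis using jl bbk[OF jl] unfolding L_def by (simp add: nth_append)
        qed
      next
        case jf: False then have jL: "j = L" using j unfolding L_def by simp
        show ?thesis
        proof (cases "k < L")
          case True then show ?thesis using jL bbk[OF True] unfolding L_def by (simp add: nth_append ip_comm[of n b])
        next
          case False then have "k = L" using k unfolding L_def by simp
          then show ?thesis using jL bb unfolding L_def by (simp add: nth_append)
        qed
      qed
    qed
    have ivr: "ip n v r = ip n r r"
      using ipr[of r] rr by simp
    have ivb: "ip n v b = s"
    proof -
      have "ip n v b = ip n b v" by (rule ip_comm)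
      also have "\<dots> = (1/s) * ip n r v" by (rule ipb)
      also have "\<dots> = s" using ivr ss s0 ip_comm[of n r v] by (simp add: field_simps)
      finally show ?thesis .
    qed
    have isp: "inspan n (bs@[b]) v" unfolding inspan_def
    proof (intro allI impI)
      fix i assume "i < n"
      have "(\<Sum>j<length (bs@[b]). ip n v ((bs@[b])!j) * ((bs@[b])!j) i)
          = (\<Sum>j<L. c j * (bs!j) i) + s * b i"
        unfolding L_def c_def by (simp add: nth_append ivb)
      also have "\<dots> = v i" unfolding b_def r_def using s0 by simp
      finally show "v i = (\<Sum>j<length (bs@[b]). ip n v ((bs@[b])!j) * ((bs@[b])!j) i)" by simp
    qed
    have ort: "orth n (bs@[b]) z" if "ip n z v = 0" "orth n bs z" for z
    proof -
      have zr: "ip n z r = 0"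
      proof -
        have "ip n z r = ip n r z" by (rule ip_comm)
        also have "\<dots> = ip n v z - (\<Sum>j<L. c j * ip n (bs!j) z)" by (rule ipr)
        also have "\<dots> = 0"
        proof -
          have "ip n v z = 0" using that(1) ip_comm[of n v z] by simp
          moreover have "(\<Sum>j<L. c j * ip n (bs!j) z) = 0"
            using that(2) ip_comm[of n _ z] unfolding orth_def L_def by (intro sum.neutral) auto
          ultimately show ?thesis by simp
        qed
        finally show ?thesis .
      qed
      have "ip n z b = 0"
        using ip_comm[of n z b] ipb[of z] ip_comm[of n r z] zr by simp
      then show ?thesis using that(2) unfolding orth_def
        by (auto simp: nth_append less_Suc_eq)
    qed
    show ?thesis using on2 isp ort by blast
  qed
qed

lemma gs_set:
  assumes "finite V" "orthonormal n bs"
  shows "\<exists>cs. orthonormal n (bs@cs) \<and> (\<forall>v\<in>V. inspan n (bs@cs) v) \<and>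
           (\<forall>z. (\<forall>v\<in>V. ip n z v = 0) \<longrightarrow> orth n bs z \<longrightarrow> orth n (bs@cs) z)"
  using assms(1)
proof (induction V)
  case empty then show ?case using assms(2) by (intro exI[of _ "[]"]) simp
next
  case (insert v V)
  then obtain cs1 where c1: "orthonormal n (bs@cs1)" "\<forall>w\<in>V. inspan n (bs@cs1) w"
    "\<forall>z. (\<forall>w\<in>V. ip n z w = 0) \<longrightarrow> orth n bs z \<longrightarrow> orth n (bs@cs1) z" by blast
  obtain cs2 where c2: "orthonormal n ((bs@cs1)@cs2)" "inspan n ((bs@cs1)@cs2) v"
    "\<forall>z. ip n z v = 0 \<longrightarrow> orth n (bs@cs1) z \<longrightarrow> orth n ((bs@cs1)@cs2) z"
    using gs_step[OF c1(1)] by blast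
  show ?case
  proof (intro exI[of _ "cs1@cs2"] conjI allI impI ballI)
    show "orthonormal n (bs @ cs1 @ cs2)" using c2(1) by simp
    fix w assume "w \<in> insert v V"
    then show "inspan n (bs @ cs1 @ cs2) w"
      using c2(2) inspan_mono[OF _ c2(1)] c1(2) by auto
  next
    fix z assume "\<forall>w\<in>insert v V. ip n z w = 0" "orth n bs z"
    then show "orth n (bs @ cs1 @ cs2) z" using c1(3) c2(3) by simp
  qed
qed

lemma orthonormal_length:
  assumes "orthonormal n bs"
  shows "length bs \<le> n"
proof -
  define e where "e k = (\<lambda>i::nat. if i = k then 1 else 0::real)" for k :: nat
  obtain cs where c: "orthonormal n (bs@cs)" "\<forall>v\<in>e ` {..<n}. inspan n (bs@cs) v"
    using gs_set[of "e ` {..<n}" n bs] assms by auto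
  define bb where "bb = bs @ cs"
  have eb: "ip n (e k) w = w k" if "k < n" for k w
  proof -
    have "ip n (e k) w = (\<Sum>i<n. if i = k then w i else 0)"
      unfolding ip_def e_def by (intro sum.cong) auto
    then show ?thesis using that by simp
  qed
  have "real n = (\<Sum>k<n. ip n (e k) (e k))"
    by (simp add: eb) (simp add: e_def)
  also have "\<dots> = (\<Sum>k<n. \<Sum>j<length bb. ((bb!j) k)^2)"
  proof (intro sum.cong refl)
    fix k assume k: "k \<in> {..<n}"
    then have "inspan n bb (e k)" using c(2) unfolding bb_def by auto
    then have "ip n (e k) (e k) = (\<Sum>j<length bb. (ip n (e k) (bb!j))^2)" by (rule parseval)
    then show "ip n (e k) (e k) = (\<Sum>j<length bb. ((bb!j) k)^2)" using k by (simp add: eb)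
  qed
  also have "\<dots> = (\<Sum>j<length bb. \<Sum>k<n. ((bb!j) k)^2)" by (rule sum.swap)
  also have "\<dots> = (\<Sum>j<length bb. ip n (bb!j) (bb!j))"
    unfolding ip_def by (simp add: power2_eq_square)
  also have "\<dots> = real (length bb)"
    using c(1) unfolding bb_def orthonormal_def by simp
  finally show ?thesis unfolding bb_def by simp
qed



lemma edist_sq: "edist n x y = r \<Longrightarrow> r \<ge> 0 \<Longrightarrow> (\<Sum>i<n. (x i - y i)^2) = r^2"
  unfolding edist_def by (auto simp: sum_nonneg)

lemma sq_pos_ex: "(\<Sum>i<n. (x i - y i)^2) = r^2 \<Longrightarrow> (r::real) > 0 \<Longrightarrow> \<exists>i<n. x i \<noteq> y i"
proof (rule ccontr)
  assume "(\<Sum>i<n. (x i - y i)^2) = r^2" "r > 0" "\<not> (\<exists>i<n. x i \<noteq> y i)"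
  then show False by simp
qed

lemma seg_coord: "p \<in> seg x y \<Longrightarrow> \<exists>t. 0 \<le> t \<and> t \<le> 1 \<and> (\<forall>i. p i = (1-t) * x i + t * y i)"
  unfolding seg_def by auto

lemma seg_intro: "0 \<le> t \<Longrightarrow> t \<le> 1 \<Longrightarrow> (\<And>i. p i = (1-t) * x i + t * y i) \<Longrightarrow> p \<in> seg x y"
  unfolding seg_def by auto

lemma seg_sym: "seg x y = seg y x"
proof -
  have "p \<in> seg y x" if P: "p \<in> seg x y" for p x y
  proof -
    obtain t where t: "0 \<le> t" "t \<le> 1" "\<forall>i. p i = (1-t) * x i + t * y i" using seg_coord[OF P] by blast
    show ?thesis by (rule seg_intro[of "1-t"]) (use t in auto)
  qed
  then show ?thesis by (intro set_eqI iffI) auto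
qed

lemma Rn_eq: "x \<in> Rn n \<Longrightarrow> y \<in> Rn n \<Longrightarrow> (\<And>i. i < n \<Longrightarrow> x i = y i) \<Longrightarrow> x = y"
proof
  fix i assume "x \<in> Rn n" "y \<in> Rn n" "\<And>i. i < n \<Longrightarrow> x i = y i"
  then show "x i = y i" unfolding Rn_def by (cases "i < n") auto
qed

lemma part1:
  assumes sg: "simple_graph VG EG" and sh: "simple_graph VH EH"
    and r1: "0 < r1" and r2: "0 < r2" and rr: "r1^2 + r2^2 = 1"
    and eg: "spherical_embedding n1 r1 VG EG" and eh: "spherical_embedding n2 r2 VH EH"
  shows "\<exists>f. unit_distance_embedding (n1 + n2) (gsum_V VG VH) (gsum_E VG VH EG EH) f"
proof -
  obtain g cg where g: "unit_distance_embedding n1 VG EG g" "cg \<in> Rn n1" "\<forall>v\<in>VG. edist n1 (g v) cg = r1"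
    using eg unfolding spherical_embedding_def by blast
  obtain h ch where h: "unit_distance_embedding n2 VH EH h" "ch \<in> Rn n2" "\<forall>v\<in>VH. edist n2 (h v) ch = r2"
    using eh unfolding spherical_embedding_def by blast
  have gR: "g a \<in> Rn n1" if "a \<in> VG" for a using g(1) that unfolding unit_distance_embedding_def by auto
  have hR: "h b \<in> Rn n2" if "b \<in> VH" for b using h(1) that unfolding unit_distance_embedding_def by auto
  have ginj: "inj_on g VG" and hinj: "inj_on h VH" using g(1) h(1) unfolding unit_distance_embedding_def by auto
  have gE: "EG a b \<Longrightarrow> edist n1 (g a) (g b) = 1" for a b using g(1) unfolding unit_distance_embedding_def by auto
  have hE: "EH a b \<Longrightarrow> edist n2 (h a) (h b) = 1" for a b using h(1) unfolding unit_distance_embedding_def by auto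
  have gS: "EG a b \<Longrightarrow> c \<in> VG \<Longrightarrow> c \<noteq> a \<Longrightarrow> c \<noteq> b \<Longrightarrow> g c \<notin> seg (g a) (g b)" for a b c
    using g(1) unfolding unit_distance_embedding_def by auto
  have hS: "EH a b \<Longrightarrow> c \<in> VH \<Longrightarrow> c \<noteq> a \<Longrightarrow> c \<noteq> b \<Longrightarrow> h c \<notin> seg (h a) (h b)" for a b c
    using h(1) unfolding unit_distance_embedding_def by auto
  have EGV: "EG a b \<Longrightarrow> a \<in> VG \<and> b \<in> VG" for a b using sg unfolding simple_graph_def by auto
  have EHV: "EH a b \<Longrightarrow> a \<in> VH \<and> b \<in> VH" for a b using sh unfolding simple_graph_def by auto
  have gsq: "(\<Sum>i<n1. (g a i - cg i)^2) = r1^2" if "a \<in> VG" for a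
    using g(3) that r1 by (intro edist_sq) auto
  have hsq: "(\<Sum>i<n2. (h b i - ch i)^2) = r2^2" if "b \<in> VH" for b
    using h(3) that r2 by (intro edist_sq) auto
  have hsq': "(\<Sum>j<n2. (ch j - h b j)^2) = r2^2" if "b \<in> VH" for b
    using hsq[OF that] by (simp add: power2_commute)
  have gsq': "(\<Sum>i<n1. (cg i - g a i)^2) = r1^2" if "a \<in> VG" for a
    using gsq[OF that] by (simp add: power2_commute)
  have gne: "\<exists>i<n1. g a i \<noteq> cg i" if "a \<in> VG" for a using sq_pos_ex[OF gsq[OF that] r1] .
  have hne: "\<exists>i<n2. h b i \<noteq> ch i" if "b \<in> VH" for b using sq_pos_ex[OF hsq[OF that] r2] .
  define F where "F = (\<lambda>v. case v of Inl a \<Rightarrow> (\<lambda>i. if i < n1 then g a i - cg i else 0)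
                                | Inr b \<Rightarrow> (\<lambda>i. if i < n1 then 0 else h b (i - n1) - ch (i - n1)))"
  have FL1: "i < n1 \<Longrightarrow> F (Inl a) i = g a i - cg i" for a i unfolding F_def by simp
  have FL2: "F (Inl a) (n1 + j) = 0" for a j unfolding F_def by simp
  have FR1: "i < n1 \<Longrightarrow> F (Inr b) i = 0" for b i unfolding F_def by simp
  have FR2: "F (Inr b) (n1 + j) = h b j - ch j" for b j unfolding F_def by simp
  have sqF: "(\<Sum>i<n1+n2. (F p i - F q i)^2) = (\<Sum>i<n1. (F p i - F q i)^2) + (\<Sum>j<n2. (F p (n1+j) - F q (n1+j))^2)" for p q
    by (rule sum_split_nat)
  have FR: "F v \<in> Rn (n1 + n2)" if "v \<in> gsum_V VG VH" for v
  proof -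
    from that consider a where "v = Inl a" "a \<in> VG" | b where "v = Inr b" "b \<in> VH"
      unfolding gsum_V_def by auto
    then show ?thesis
    proof cases
      case 1 then show ?thesis unfolding Rn_def F_def by auto
    next
      case 2 then show ?thesis using hR[OF 2(2)] h(2) unfolding Rn_def F_def by auto
    qed
  qed
  have injF: "inj_on F (gsum_V VG VH)"
  proof (rule inj_onI)
    fix p q assume p: "p \<in> gsum_V VG VH" and q: "q \<in> gsum_V VG VH" and e: "F p = F q"
    show "p = q"
    proof (cases p)
      case (Inl a)
      with p have a: "a \<in> VG" unfolding gsum_V_def by auto
      show ?thesis
      proof (cases q)
        case (Inl a')
        with q have a': "a' \<in> VG" unfolding gsum_V_def by auto
        have "g a = g a'"
        proof (rule Rn_eq[OF gR[OF a] gR[OF a']])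
          fix i assume i: "i < n1"
          have "F (Inl a) i = F (Inl a') i" using e \<open>p = Inl a\<close> \<open>q = Inl a'\<close> by simp
          then show "g a i = g a' i" by (simp add: FL1[OF i])
        qed
        then have "a = a'" using inj_onD[OF ginj _ a a'] by blast
        then show ?thesis using \<open>p = Inl a\<close> \<open>q = Inl a'\<close> by simp
      next
        case (Inr b)
        obtain i where i: "i < n1" "g a i \<noteq> cg i" using gne[OF a] by blast
        have "F (Inl a) i = F (Inr b) i" using e Inl Inr by simp
        then show ?thesis using i by (simp add: FL1 FR1)
      qed
    next
      case (Inr b)
      with p have b: "b \<in> VH" unfolding gsum_V_def by auto
      show ?thesis
      proof (cases q)
        case (Inl a')
        with q have a': "a' \<in> VG" unfolding gsum_V_def by auto
        obtain i where i: "i < n1" "g a' i \<noteq> cg i" using gne[OF a'] by blast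
        have "F (Inr b) i = F (Inl a') i" using e Inl Inr by simp
        then show ?thesis using i by (simp add: FL1 FR1)
      next
        case (Inr b')
        with q have b': "b' \<in> VH" unfolding gsum_V_def by auto
        have "h b = h b'"
        proof (rule Rn_eq[OF hR[OF b] hR[OF b']])
          fix j assume j: "j < n2"
          have "F (Inr b) (n1 + j) = F (Inr b') (n1 + j)" using e \<open>p = Inr b\<close> \<open>q = Inr b'\<close> by simp
          then show "h b j = h b' j" by (simp add: FR2)
        qed
        then have "b = b'" using inj_onD[OF hinj _ b b'] by blast
        then show ?thesis using \<open>p = Inr b\<close> \<open>q = Inr b'\<close> by simp
      qed
    qed
  qed
  have dist: "edist (n1 + n2) (F u) (F v) = 1" if "gsum_E VG VH EG EH u v" for u v
  proof (cases u)
    case (Inl a)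
    show ?thesis
    proof (cases v)
      case (Inl a')
      have "EG a a'" using that \<open>u = Inl a\<close> Inl by simp
      then show ?thesis using gE[OF \<open>EG a a'\<close>] unfolding edist_def sqF \<open>u = Inl a\<close> Inl
        by (simp add: FL1 FL2)
    next
      case (Inr b)
      have ab: "a \<in> VG" "b \<in> VH" using that \<open>u = Inl a\<close> Inr by auto
      have "(\<Sum>i<n1+n2. (F u i - F v i)^2) = r1^2 + r2^2"
        unfolding sqF \<open>u = Inl a\<close> Inr using gsq[OF ab(1)] hsq[OF ab(2)] gsq'[OF ab(1)] hsq'[OF ab(2)]
        by (simp add: FL1 FL2 FR1 FR2 power2_commute[of 0])
      then show ?thesis unfolding edist_def rr by simp
    qed
  next
    case (Inr b)
    show ?thesis
    proof (cases v)
      case (Inl a)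
      have ab: "a \<in> VG" "b \<in> VH" using that \<open>u = Inr b\<close> Inl by auto
      have "(\<Sum>i<n1+n2. (F u i - F v i)^2) = r1^2 + r2^2"
        unfolding sqF \<open>u = Inr b\<close> Inl using gsq[OF ab(1)] hsq[OF ab(2)] gsq'[OF ab(1)] hsq'[OF ab(2)]
        by (simp add: FL1 FL2 FR1 FR2 power2_commute[of 0])
      then show ?thesis unfolding edist_def rr by simp
    next
      case (Inr b')
      have "EH b b'" using that \<open>u = Inr b\<close> Inr by simp
      then show ?thesis using hE[OF \<open>EH b b'\<close>] unfolding edist_def sqF \<open>u = Inr b\<close> Inr
        by (simp add: FR1 FR2)
    qed
  qed
  have segcross: "F w \<notin> seg (F (Inl a)) (F (Inr b))"
    if ab: "a \<in> VG" "b \<in> VH" and w: "w \<in> gsum_V VG VH" "w \<noteq> Inl a" "w \<noteq> Inr b" for a b w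
  proof
    assume "F w \<in> seg (F (Inl a)) (F (Inr b))"
    then obtain t where t: "0 \<le> t" "t \<le> 1" "\<And>i. F w i = (1-t) * F (Inl a) i + t * F (Inr b) i"
      using seg_coord by blast
    show False
    proof (cases w)
      case (Inl a')
      with w have a': "a' \<in> VG" "a' \<noteq> a" unfolding gsum_V_def by auto
      show False
      proof (cases "t = 0")
        case True
        have "g a' = g a"
        proof (rule Rn_eq[OF gR[OF a'(1)] gR[OF ab(1)]])
          fix i assume i: "i < n1"
          show "g a' i = g a i" using t(3)[of i] True Inl by (simp add: FL1[OF i])
        qed
        then show False using inj_onD[OF ginj _ a'(1) ab(1)] a'(2) by blast
      next
        case False
        obtain j where "j < n2" "h b j \<noteq> ch j" using hne[OF ab(2)] by blast
        then show False using t(3)[of "n1 + j"] False Inl by (simp add: FL2 FR2)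
      qed
    next
      case (Inr b')
      with w have b': "b' \<in> VH" "b' \<noteq> b" unfolding gsum_V_def by auto
      show False
      proof (cases "t = 1")
        case True
        have "h b' = h b"
        proof (rule Rn_eq[OF hR[OF b'(1)] hR[OF ab(2)]])
          fix j assume j: "j < n2"
          show "h b' j = h b j" using t(3)[of "n1 + j"] True Inr by (simp add: FR2)
        qed
        then show False using inj_onD[OF hinj _ b'(1) ab(2)] b'(2) by blast
      next
        case False
        obtain i where "i < n1" "g a i \<noteq> cg i" using gne[OF ab(1)] by blast
        then show False using t(3)[of i] False Inr by (simp add: FL1 FR1)
      qed
    qed
  qed
  have segok: "F w \<notin> seg (F u) (F v)"
    if e: "gsum_E VG VH EG EH u v" and w: "w \<in> gsum_V VG VH" "w \<noteq> u" "w \<noteq> v" for u v w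
  proof (cases u)
    case (Inl a)
    show ?thesis
    proof (cases v)
      case (Inl a')
      have E: "EG a a'" using e \<open>u = Inl a\<close> Inl by simp
      then have aa: "a \<in> VG" "a' \<in> VG" using EGV by auto
      show ?thesis
      proof
        assume "F w \<in> seg (F u) (F v)"
        then obtain t where t: "0 \<le> t" "t \<le> 1" "\<And>i. F w i = (1-t) * F u i + t * F v i"
          using seg_coord by blast
        show False
        proof (cases w)
          case (Inl c)
          with w \<open>u = Inl a\<close> \<open>v = Inl a'\<close> have c: "c \<in> VG" "c \<noteq> a" "c \<noteq> a'" unfolding gsum_V_def by auto
          have "g c \<in> seg (g a) (g a')"
          proof (rule seg_intro[OF t(1,2)])
            fix i show "g c i = (1 - t) * g a i + t * g a' i"
            proof (cases "i < n1")
              case True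
              then show ?thesis using t(3)[of i] Inl \<open>u = Inl a\<close> \<open>v = Inl a'\<close>
                by (simp add: FL1; simp add: algebra_simps)
            next
              case False
              then show ?thesis using gR[OF c(1)] gR[OF aa(1)] gR[OF aa(2)] unfolding Rn_def by simp
            qed
          qed
          then show False using gS[OF E c(1) c(2) c(3)] by simp
        next
          case (Inr b)
          with w have b: "b \<in> VH" unfolding gsum_V_def by auto
          obtain j where "j < n2" "h b j \<noteq> ch j" using hne[OF b] by blast
          then show False using t(3)[of "n1 + j"] Inr \<open>u = Inl a\<close> \<open>v = Inl a'\<close> by (simp add: FL2 FR2)
        qed
      qed
    next
      case (Inr b)
      have ab: "a \<in> VG" "b \<in> VH" using e \<open>u = Inl a\<close> Inr by auto
      show ?thesis using segcross[OF ab w(1)] w \<open>u = Inl a\<close> Inr by simp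
    qed
  next
    case (Inr b)
    show ?thesis
    proof (cases v)
      case (Inl a)
      have ab: "a \<in> VG" "b \<in> VH" using e \<open>u = Inr b\<close> Inl by auto
      show ?thesis using segcross[OF ab w(1)] w \<open>u = Inr b\<close> Inl by (simp add: seg_sym)
    next
      case (Inr b')
      have E: "EH b b'" using e \<open>u = Inr b\<close> Inr by simp
      then have bb: "b \<in> VH" "b' \<in> VH" using EHV by auto
      show ?thesis
      proof
        assume "F w \<in> seg (F u) (F v)"
        then obtain t where t: "0 \<le> t" "t \<le> 1" "\<And>i. F w i = (1-t) * F u i + t * F v i"
          using seg_coord by blast
        show False
        proof (cases w)
          case (Inr c)
          with w \<open>u = Inr b\<close> \<open>v = Inr b'\<close> have c: "c \<in> VH" "c \<noteq> b" "c \<noteq> b'" unfolding gsum_V_def by auto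
          have "h c \<in> seg (h b) (h b')"
          proof (rule seg_intro[OF t(1,2)])
            fix j show "h c j = (1 - t) * h b j + t * h b' j"
            proof (cases "j < n2")
              case True
              then show ?thesis using t(3)[of "n1 + j"] Inr \<open>u = Inr b\<close> \<open>v = Inr b'\<close>
                by (simp add: FR2; simp add: algebra_simps)
            next
              case False
              then show ?thesis using hR[OF c(1)] hR[OF bb(1)] hR[OF bb(2)] unfolding Rn_def by simp
            qed
          qed
          then show False using hS[OF E c(1) c(2) c(3)] by simp
        next
          case (Inl a)
          with w have a: "a \<in> VG" unfolding gsum_V_def by auto
          obtain i where "i < n1" "g a i \<noteq> cg i" using gne[OF a] by blast
          then show False using t(3)[of i] Inl \<open>u = Inr b\<close> \<open>v = Inr b'\<close> by (simp add: FL1 FR1)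
        qed
      qed
    qed
  qed
  show ?thesis
    unfolding unit_distance_embedding_def using FR injF dist segok by blast
qed



lemma two_elems: "finite A \<Longrightarrow> card A \<ge> 2 \<Longrightarrow> \<exists>a b. a \<in> A \<and> b \<in> A \<and> a \<noteq> b"
  using card_le_Suc0_iff_eq by fastforce

lemma sum_trunc: "(m::nat) \<le> N \<Longrightarrow> (\<And>i. m \<le> i \<Longrightarrow> f i = 0) \<Longrightarrow> (\<Sum>i<N. f i) = (\<Sum>i<m. f i::real)"
proof -
  assume "m \<le> N" "\<And>i. m \<le> i \<Longrightarrow> f i = 0"
  then have "(\<Sum>i<m + (N - m). f i) = (\<Sum>i<m. f i)" by (simp only: sum_split_nat) simp
  then show ?thesis using \<open>m \<le> N\<close> by simp
qed

lemma sumsq_zero: "(\<Sum>i<(n::nat). (p i - q i)^2) = (0::real) \<Longrightarrow> i < n \<Longrightarrow> p i = q i"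
  using sum_nonneg_eq_0_iff[of "{..<n}" "\<lambda>i. (p i - q i)^2"] by auto

lemma parseval_diff:
  assumes "inspan n bb (\<lambda>i. p i - q i)"
  shows "(\<Sum>i<n. (p i - q i)^2) = (\<Sum>j<length bb. (ip n p (bb!j) - ip n q (bb!j))^2)"
proof -
  have "(\<Sum>i<n. (p i - q i)^2) = ip n (\<lambda>i. p i - q i) (\<lambda>i. p i - q i)"
    by (simp add: ip_def power2_eq_square)
  also have "\<dots> = (\<Sum>j<length bb. (ip n (\<lambda>i. p i - q i) (bb!j))^2)" by (rule parseval[OF assms])
  also have "\<dots> = (\<Sum>j<length bb. (ip n p (bb!j) - ip n q (bb!j))^2)" by (simp only: ip_diff)
  finally show ?thesis .
qed

lemma cross_orth:
  assumes "(\<Sum>i<n. (x i - y i)^2) = 1" "(\<Sum>i<n. (x i - y0 i)^2) = 1"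
          "(\<Sum>i<n. (x0 i - y i)^2) = 1" "(\<Sum>i<n. (x0 i - y0 i)^2) = (1::real)"
  shows "ip n (\<lambda>i. x i - x0 i) (\<lambda>i. y i - y0 i) = 0"
proof -
  have "ip n (\<lambda>i. x i - x0 i) (\<lambda>i. y i - y0 i)
      = (\<Sum>i<n. ((x i - y0 i)^2 + (x0 i - y i)^2 - (x i - y i)^2 - (x0 i - y0 i)^2) / 2)"
    unfolding ip_def by (intro sum.cong refl) (simp add: power2_eq_square field_simps)
  also have "\<dots> = 0"
    using assms by (simp add: sum_divide_distrib[symmetric] sum.distrib sum_subtractf)
  finally show ?thesis .
qed

lemma part2:
  assumes sg: "simple_graph VG EG" and sh: "simple_graph VH EH"
    and cG: "card VG \<ge> 2" and cH: "card VH \<ge> 2"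
    and uf: "unit_distance_embedding n (gsum_V VG VH) (gsum_E VG VH EG EH) f"
  shows "\<exists>n1 n2 (r1::real) r2. n1 \<ge> 1 \<and> n2 \<ge> 1 \<and> n1 + n2 = n \<and>
               0 < r1 \<and> r1 < 1 \<and> 0 < r2 \<and> r2 < 1 \<and> r1^2 + r2^2 = 1 \<and>
               spherical_embedding n1 r1 VG EG \<and> spherical_embedding n2 r2 VH EH"
proof -
  have fR: "f v \<in> Rn n" if "v \<in> gsum_V VG VH" for v using uf that unfolding unit_distance_embedding_def by auto
  have finj: "inj_on f (gsum_V VG VH)" using uf unfolding unit_distance_embedding_def by auto
  have fE: "gsum_E VG VH EG EH u v \<Longrightarrow> edist n (f u) (f v) = 1" for u v
    using uf unfolding unit_distance_embedding_def by auto
  have fS: "gsum_E VG VH EG EH u v \<Longrightarrow> w \<in> gsum_V VG VH \<Longrightarrow> w \<noteq> u \<Longrightarrow> w \<noteq> v \<Longrightarrow> f w \<notin> seg (f u) (f v)" for u v w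
    using uf unfolding unit_distance_embedding_def by blast
  have EGV: "EG a b \<Longrightarrow> a \<in> VG \<and> b \<in> VG" for a b using sg unfolding simple_graph_def by auto
  have EHV: "EH a b \<Longrightarrow> a \<in> VH \<and> b \<in> VH" for a b using sh unfolding simple_graph_def by auto
  have finG: "finite VG" using sg unfolding simple_graph_def by auto
  have finH: "finite VH" using sh unfolding simple_graph_def by auto
  obtain a0 a1 where a01: "a0 \<in> VG" "a1 \<in> VG" "a0 \<noteq> a1" using two_elems[OF finG cG] by blast
  obtain b0 b1 where b01: "b0 \<in> VH" "b1 \<in> VH" "b0 \<noteq> b1" using two_elems[OF finH cH] by blast
  define X where "X a = f (Inl a)" for a
  define Y where "Y b = f (Inr b)" for b
  define x0 where "x0 = X a0"
  define y0 where "y0 = Y b0"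
  have XR: "a \<in> VG \<Longrightarrow> X a \<in> Rn n" for a unfolding X_def by (rule fR) (simp add: gsum_V_def)
  have YR: "b \<in> VH \<Longrightarrow> Y b \<in> Rn n" for b unfolding Y_def by (rule fR) (simp add: gsum_V_def)
  have Xinj: "a \<in> VG \<Longrightarrow> a' \<in> VG \<Longrightarrow> X a = X a' \<Longrightarrow> a = a'" for a a'
    using finj unfolding X_def by (auto simp: gsum_V_def dest: inj_onD)
  have Yinj: "b \<in> VH \<Longrightarrow> b' \<in> VH \<Longrightarrow> Y b = Y b' \<Longrightarrow> b = b'" for b b'
    using finj unfolding Y_def by (auto simp: gsum_V_def dest: inj_onD)
  have XY1: "(\<Sum>i<n. (X a i - Y b i)^2) = 1" if "a \<in> VG" "b \<in> VH" for a b
  proof -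
    have "edist n (X a) (Y b) = 1" using fE[of "Inl a" "Inr b"] that unfolding X_def Y_def by simp
    from edist_sq[OF this] show ?thesis by simp
  qed
  have orthXY: "ip n (\<lambda>i. X a i - x0 i) (\<lambda>i. Y b i - y0 i) = 0" if "a \<in> VG" "b \<in> VH" for a b
    unfolding x0_def y0_def using that a01 b01 by (intro cross_orth XY1) auto
  obtain bW where bW: "orthonormal n ([]@bW)" "\<forall>v\<in>(\<lambda>b i. Y b i - y0 i) ` VH. inspan n ([]@bW) v"
    "\<forall>z. (\<forall>v\<in>(\<lambda>b i. Y b i - y0 i) ` VH. ip n z v = 0) \<longrightarrow> orth n [] z \<longrightarrow> orth n ([]@bW) z"
    using gs_set[of "(\<lambda>b i. Y b i - y0 i) ` VH" n "[]"] finH unfolding orthonormal_def by auto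
  obtain bU where bU: "orthonormal n (bW@bU)"
    "\<forall>v\<in>(\<lambda>a i. X a i - x0 i) ` VG \<union> {\<lambda>i. x0 i - y0 i}. inspan n (bW@bU) v"
    using gs_set[of "(\<lambda>a i. X a i - x0 i) ` VG \<union> {\<lambda>i. x0 i - y0 i}" n bW] finG bW(1) by auto
  define bb where "bb = bW @ bU"
  define n2 where "n2 = length bW"
  define m1 where "m1 = length bU"
  have Lbb: "length bb = n2 + m1" unfolding bb_def n2_def m1_def by simp
  have Lle: "n2 + m1 \<le> n" using orthonormal_length[OF bU(1)] unfolding n2_def m1_def by simp
  define P where "P p j = ip n p (bb!j)" for p j
  have F1: "P (X a) j = P x0 j" if "a \<in> VG" "j < n2" for a j
  proof -
    have "orth n bW (\<lambda>i. X a i - x0 i)"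
      using bW(3) orthXY[OF that(1)] by (simp add: orth_def)
    then have "ip n (\<lambda>i. X a i - x0 i) (bW!j) = 0" using that(2) unfolding orth_def n2_def by simp
    then show ?thesis unfolding P_def bb_def ip_diff using that(2) by (simp add: nth_append n2_def)
  qed
  have YW: "inspan n bW (\<lambda>i. Y b i - y0 i)" if "b \<in> VH" for b using bW(2) that by auto
  have F2: "P (Y b) (n2 + k) = P y0 (n2 + k)" if "b \<in> VH" "k < m1" for b k
  proof -
    have "ip n (\<lambda>i. Y b i - y0 i) (bU!k) = (\<Sum>j<length bW. ip n (\<lambda>i. Y b i - y0 i) (bW!j) * ip n (bW!j) (bU!k))"
      by (rule ip_span[OF YW[OF that(1)]])
    also have "\<dots> = 0"
    proof (rule sum.neutral, intro ballI)
      fix j assume "j \<in> {..<length bW}"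
      then have jl: "j < length bW" by simp
      have "ip n ((bW@bU)!j) ((bW@bU)!(length bW + k)) = 0"
        using bU(1)[unfolded orthonormal_def, rule_format, of j "length bW + k"] that(2) jl unfolding m1_def by simp
      then show "ip n (\<lambda>i. Y b i - y0 i) (bW!j) * ip n (bW!j) (bU!k) = 0"
        using jl by (simp add: nth_append)
    qed
    finally show ?thesis unfolding P_def bb_def ip_diff n2_def by (simp add: nth_append)
  qed
  define GP where "GP z \<longleftrightarrow> inspan n bb (\<lambda>i. z i - x0 i) \<and> (\<forall>j<n2. P z j = P x0 j)" for z
  define HP where "HP z \<longleftrightarrow> inspan n bb (\<lambda>i. z i - y0 i) \<and> (\<forall>k<m1. P z (n2 + k) = P y0 (n2 + k))" for z
  have xy0: "inspan n bb (\<lambda>i. x0 i - y0 i)" using bU(2) unfolding bb_def by auto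
  have GPX: "GP (X a)" if "a \<in> VG" for a
    unfolding GP_def using bU(2) that F1 unfolding bb_def by auto
  have HPY: "HP (Y b)" if "b \<in> VH" for b
  proof -
    have "inspan n bb (\<lambda>i. Y b i - y0 i)"
      unfolding bb_def by (rule inspan_mono[OF YW[OF that] bU(1)])
    then show ?thesis unfolding HP_def using F2 that by auto
  qed
  have GPcomb: "GP (\<lambda>i. (1-t) * p i + t * q i)" if "GP p" "GP q" for p q t
  proof -
    have "inspan n bb (\<lambda>i. (1-t) * (p i - x0 i) + t * (q i - x0 i))"
      using that unfolding GP_def by (intro inspan_lin) auto
    then have "inspan n bb (\<lambda>i. ((1-t) * p i + t * q i) - x0 i)"
      by (rule inspan_cong) (simp add: algebra_simps)
    moreover have Pc: "P (\<lambda>i. (1-t) * p i + t * q i) j = (1-t) * P p j + t * P q j" for j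
      unfolding P_def by (rule ip_lin)
    moreover have "\<forall>j<n2. P (\<lambda>i. (1-t) * p i + t * q i) j = P x0 j"
      using that unfolding GP_def Pc by (simp; simp add: algebra_simps)
    ultimately show ?thesis unfolding GP_def by blast
  qed
  have HPcomb: "HP (\<lambda>i. (1-t) * p i + t * q i)" if "HP p" "HP q" for p q t
  proof -
    have "inspan n bb (\<lambda>i. (1-t) * (p i - y0 i) + t * (q i - y0 i))"
      using that unfolding HP_def by (intro inspan_lin) auto
    then have "inspan n bb (\<lambda>i. ((1-t) * p i + t * q i) - y0 i)"
      by (rule inspan_cong) (simp add: algebra_simps)
    moreover have Pc: "P (\<lambda>i. (1-t) * p i + t * q i) j = (1-t) * P p j + t * P q j" for j
      unfolding P_def by (rule ip_lin)
    moreover have "\<forall>k<m1. P (\<lambda>i. (1-t) * p i + t * q i) (n2 + k) = P y0 (n2 + k)"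
      using that unfolding HP_def Pc by (simp; simp add: algebra_simps)
    ultimately show ?thesis unfolding HP_def by blast
  qed
  have sqP: "(\<Sum>i<n. (p i - q i)^2) = (\<Sum>j<n2. (P p j - P q j)^2) + (\<Sum>k<m1. (P p (n2+k) - P q (n2+k))^2)"
    if "inspan n bb (\<lambda>i. p i - q i)" for p q
    using parseval_diff[OF that] unfolding Lbb sum_split_nat P_def .
  have GPd: "(\<Sum>i<n. (p i - q i)^2) = (\<Sum>k<m1. (P p (n2+k) - P q (n2+k))^2)" if "GP p" "GP q" for p q
  proof -
    have "inspan n bb (\<lambda>i. 1 * (p i - x0 i) + (-1) * (q i - x0 i))"
      using that unfolding GP_def by (intro inspan_lin) auto
    then have "inspan n bb (\<lambda>i. p i - q i)" by (rule inspan_cong) simp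
    then show ?thesis using sqP that unfolding GP_def by simp
  qed
  have HPd: "(\<Sum>i<n. (p i - q i)^2) = (\<Sum>j<n2. (P p j - P q j)^2)" if "HP p" "HP q" for p q
  proof -
    have "inspan n bb (\<lambda>i. 1 * (p i - y0 i) + (-1) * (q i - y0 i))"
      using that unfolding HP_def by (intro inspan_lin) auto
    then have "inspan n bb (\<lambda>i. p i - q i)" by (rule inspan_cong) simp
    then show ?thesis using sqP that unfolding HP_def by simp
  qed
  have GHd: "(\<Sum>i<n. (p i - q i)^2) = (\<Sum>j<n2. (P x0 j - P q j)^2) + (\<Sum>k<m1. (P p (n2+k) - P y0 (n2+k))^2)"
    if "GP p" "HP q" for p q
  proof -
    have "inspan n bb (\<lambda>i. 1 * (p i - x0 i) + 1 * (x0 i - y0 i))"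
      using that xy0 unfolding GP_def by (intro inspan_lin) auto
    then have "inspan n bb (\<lambda>i. 1 * (p i - y0 i) + (-1) * (q i - y0 i))"
      using that unfolding HP_def by (intro inspan_lin) (auto elim: inspan_cong)
    then have "inspan n bb (\<lambda>i. p i - q i)" by (rule inspan_cong) simp
    then show ?thesis using sqP that unfolding GP_def HP_def by simp
  qed
  define n1 where "n1 = n - n2"
  define \<phi> where "\<phi> a = (\<lambda>i. if i < m1 then P (X a) (n2+i) else 0)" for a
  define c where "c = (\<lambda>i. if i < m1 then P y0 (n2+i) else 0)"
  define \<psi> where "\<psi> b = (\<lambda>j. if j < n2 then P (Y b) j else 0)" for b
  define d where "d = (\<lambda>j. if j < n2 then P x0 j else 0)"
  define A where "A a = (\<Sum>k<n1. (\<phi> a k - c k)^2)" for a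
  define B where "B b = (\<Sum>j<n2. (\<psi> b j - d j)^2)" for b
  have m1n1: "m1 \<le> n1" using Lle unfolding n1_def by simp
  have eqRn: "p = q" if "(\<Sum>i<N. (p i - q i)^2) = 0" "p \<in> Rn N" "\<And>i. N \<le> i \<Longrightarrow> q i = 0" for p q :: "nat \<Rightarrow> real" and N
  proof
    fix i show "p i = q i"
    proof (cases "i < N")
      case True then show ?thesis using sumsq_zero[OF that(1)] by simp
    next
      case False then show ?thesis using that(2,3) unfolding Rn_def by simp
    qed
  qed
  have phid: "(\<Sum>k<n1. (\<phi> a k - \<phi> a' k)^2) = (\<Sum>i<n. (X a i - X a' i)^2)" if "a \<in> VG" "a' \<in> VG" for a a'
  proof -
    have "(\<Sum>k<n1. (\<phi> a k - \<phi> a' k)^2) = (\<Sum>k<m1. (\<phi> a k - \<phi> a' k)^2)"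
      by (rule sum_trunc[OF m1n1]) (simp add: \<phi>_def)
    also have "\<dots> = (\<Sum>k<m1. (P (X a) (n2+k) - P (X a') (n2+k))^2)"
      by (intro sum.cong refl) (simp add: \<phi>_def)
    also have "\<dots> = (\<Sum>i<n. (X a i - X a' i)^2)" using GPd[OF GPX[OF that(1)] GPX[OF that(2)]] by simp
    finally show ?thesis .
  qed
  have psid: "(\<Sum>j<n2. (\<psi> b j - \<psi> b' j)^2) = (\<Sum>i<n. (Y b i - Y b' i)^2)" if "b \<in> VH" "b' \<in> VH" for b b'
  proof -
    have "(\<Sum>j<n2. (\<psi> b j - \<psi> b' j)^2) = (\<Sum>j<n2. (P (Y b) j - P (Y b') j)^2)"
      by (intro sum.cong refl) (simp add: \<psi>_def)
    also have "\<dots> = (\<Sum>i<n. (Y b i - Y b' i)^2)" using HPd[OF HPY[OF that(1)] HPY[OF that(2)]] by simp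
    finally show ?thesis .
  qed
  have AB: "A a + B b = 1" if "a \<in> VG" "b \<in> VH" for a b
  proof -
    have "A a = (\<Sum>k<m1. (\<phi> a k - c k)^2)"
      unfolding A_def by (rule sum_trunc[OF m1n1]) (simp add: \<phi>_def c_def)
    also have "\<dots> = (\<Sum>k<m1. (P (X a) (n2+k) - P y0 (n2+k))^2)"
      by (intro sum.cong refl) (simp add: \<phi>_def c_def)
    finally have 1: "A a = \<dots>" .
    have 2: "B b = (\<Sum>j<n2. (P x0 j - P (Y b) j)^2)"
      unfolding B_def by (intro sum.cong refl) (simp add: \<psi>_def d_def power2_commute)
    show ?thesis using GHd[OF GPX[OF that(1)] HPY[OF that(2)]] XY1[OF that] 1 2 by simp
  qed
  have Aeq: "A a = A a0" if "a \<in> VG" for a using AB[OF that b01(1)] AB[OF a01(1) b01(1)] by simp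
  have Beq: "B b = B b0" if "b \<in> VH" for b using AB[OF a01(1) that] AB[OF a01(1) b01(1)] by simp
  have A0: "A a0 \<ge> 0" unfolding A_def by (simp add: sum_nonneg)
  have B0: "B b0 \<ge> 0" unfolding B_def by (simp add: sum_nonneg)
  have phiR: "\<phi> a \<in> Rn n1" for a unfolding Rn_def \<phi>_def using m1n1 by auto
  have cR: "c \<in> Rn n1" unfolding Rn_def c_def using m1n1 by auto
  have psiR: "\<psi> b \<in> Rn n2" for b unfolding Rn_def \<psi>_def by auto
  have dR: "d \<in> Rn n2" unfolding Rn_def d_def by auto
  have phiinj: "a = a'" if "a \<in> VG" "a' \<in> VG" "\<phi> a = \<phi> a'" for a a'
  proof -
    have "(\<Sum>i<n. (X a i - X a' i)^2) = 0" using phid[OF that(1,2)] that(3) by simp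
    then have "X a = X a'" using XR[OF that(1)] XR[OF that(2)] by (intro eqRn) (auto simp: Rn_def)
    then show ?thesis using Xinj that by blast
  qed
  have psiinj: "b = b'" if "b \<in> VH" "b' \<in> VH" "\<psi> b = \<psi> b'" for b b'
  proof -
    have "(\<Sum>i<n. (Y b i - Y b' i)^2) = 0" using psid[OF that(1,2)] that(3) by simp
    then have "Y b = Y b'" using YR[OF that(1)] YR[OF that(2)] by (intro eqRn) (auto simp: Rn_def)
    then show ?thesis using Yinj that by blast
  qed
  have Apos: "A a0 > 0"
  proof (rule ccontr)
    assume "\<not> A a0 > 0"
    then have z: "A a0 = 0" "A a1 = 0" using A0 Aeq[OF a01(2)] by auto
    have "\<phi> a0 = c" using z(1) phiR cR unfolding A_def by (intro eqRn) (auto simp: Rn_def)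
    moreover have "\<phi> a1 = c" using z(2) phiR cR unfolding A_def by (intro eqRn) (auto simp: Rn_def)
    ultimately show False using phiinj[OF a01(1,2)] a01(3) by simp
  qed
  have Bpos: "B b0 > 0"
  proof (rule ccontr)
    assume "\<not> B b0 > 0"
    then have z: "B b0 = 0" "B b1 = 0" using B0 Beq[OF b01(2)] by auto
    have "\<psi> b0 = d" using z(1) psiR dR unfolding B_def by (intro eqRn) (auto simp: Rn_def)
    moreover have "\<psi> b1 = d" using z(2) psiR dR unfolding B_def by (intro eqRn) (auto simp: Rn_def)
    ultimately show False using psiinj[OF b01(1,2)] b01(3) by simp
  qed
  have n2pos: "n2 \<ge> 1"
  proof (rule ccontr)
    assume "\<not> n2 \<ge> 1" then have "n2 = 0" by simp
    then have "B b0 = 0" unfolding B_def by simp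
    then show False using Bpos by simp
  qed
  have m1pos: "m1 \<ge> 1"
  proof (rule ccontr)
    assume "\<not> m1 \<ge> 1" then have "m1 = 0" by simp
    then have "A a0 = 0" unfolding A_def \<phi>_def c_def by simp
    then show False using Apos by simp
  qed
  define r1 where "r1 = sqrt (A a0)"
  define r2 where "r2 = sqrt (B b0)"
  have r1sq: "r1^2 = A a0" unfolding r1_def using A0 by simp
  have r2sq: "r2^2 = B b0" unfolding r2_def using B0 by simp
  have rr: "r1^2 + r2^2 = 1" using AB[OF a01(1) b01(1)] r1sq r2sq by simp
  have r1p: "r1 > 0" unfolding r1_def using Apos by simp
  have r2p: "r2 > 0" unfolding r2_def using Bpos by simp
  have r1l: "r1 < 1"
  proof -
    have "r2^2 > 0" using r2p by simp
    then have "r1^2 < 1" using rr by linarith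
    then show ?thesis using abs_square_less_1[of r1] r1p by simp
  qed
  have r2l: "r2 < 1"
  proof -
    have "r1^2 > 0" using r1p by simp
    then have "r2^2 < 1" using rr by linarith
    then show ?thesis using abs_square_less_1[of r2] r2p by simp
  qed
  have sphG: "spherical_embedding n1 r1 VG EG"
    unfolding spherical_embedding_def
  proof (intro exI conjI)
    show "c \<in> Rn n1" by (rule cR)
    show "\<forall>v\<in>VG. edist n1 (\<phi> v) c = r1"
      using Aeq unfolding edist_def A_def r1_def by auto
    show "unit_distance_embedding n1 VG EG \<phi>"
      unfolding unit_distance_embedding_def
    proof (intro conjI allI impI ballI)
      show "\<And>v. v \<in> VG \<Longrightarrow> \<phi> v \<in> Rn n1" by (rule phiR)
      show "inj_on \<phi> VG" using phiinj by (auto intro: inj_onI)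
    next
      fix u v assume E: "EG u v"
      have "edist n (X u) (X v) = 1" using fE[of "Inl u" "Inl v"] E unfolding X_def by simp
      then show "edist n1 (\<phi> u) (\<phi> v) = 1" using phid EGV[OF E] unfolding edist_def by simp
    next
      fix u v w assume H: "EG u v \<and> w \<in> VG \<and> w \<noteq> u \<and> w \<noteq> v"
      then have E: "EG u v" and w: "w \<in> VG" "w \<noteq> u" "w \<noteq> v" by auto
      have uv: "u \<in> VG" "v \<in> VG" using EGV[OF E] by auto
      show "\<phi> w \<notin> seg (\<phi> u) (\<phi> v)"
      proof
        assume "\<phi> w \<in> seg (\<phi> u) (\<phi> v)"
        then obtain t where t: "0 \<le> t" "t \<le> 1" "\<forall>i. \<phi> w i = (1-t) * \<phi> u i + t * \<phi> v i"
          using seg_coord by blast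
        define z where "z = (\<lambda>i. (1-t) * X u i + t * X v i)"
        have Gz: "GP z" unfolding z_def by (intro GPcomb GPX uv)
        have Pz: "P z j = (1-t) * P (X u) j + t * P (X v) j" for j
          unfolding P_def z_def by (rule ip_lin)
        have "(\<Sum>k<m1. (P (X w) (n2+k) - P z (n2+k))^2) = 0"
        proof (rule sum.neutral, intro ballI)
          fix k assume "k \<in> {..<m1}"
          then show "(P (X w) (n2+k) - P z (n2+k))^2 = 0"
            using t(3)[rule_format, of k] unfolding Pz \<phi>_def by simp
        qed
        then have "(\<Sum>i<n. (X w i - z i)^2) = 0" using GPd[OF GPX[OF w(1)] Gz] by simp
        then have "X w = z" using XR[OF w(1)] XR[OF uv(1)] XR[OF uv(2)]
          by (intro eqRn) (auto simp: Rn_def z_def)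
        then have "X w \<in> seg (X u) (X v)" unfolding z_def by (intro seg_intro[OF t(1,2)]) simp
        moreover have "X w \<notin> seg (X u) (X v)"
          unfolding X_def using w E by (intro fS) (auto simp: gsum_V_def)
        ultimately show False by simp
      qed
    qed
  qed
  have sphH: "spherical_embedding n2 r2 VH EH"
    unfolding spherical_embedding_def
  proof (intro exI conjI)
    show "d \<in> Rn n2" by (rule dR)
    show "\<forall>v\<in>VH. edist n2 (\<psi> v) d = r2"
      using Beq unfolding edist_def B_def r2_def by auto
    show "unit_distance_embedding n2 VH EH \<psi>"
      unfolding unit_distance_embedding_def
    proof (intro conjI allI impI ballI)
      show "\<And>v. v \<in> VH \<Longrightarrow> \<psi> v \<in> Rn n2" by (rule psiR)
      show "inj_on \<psi> VH" using psiinj by (auto intro: inj_onI)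
    next
      fix u v assume E: "EH u v"
      have "edist n (Y u) (Y v) = 1" using fE[of "Inr u" "Inr v"] E unfolding Y_def by simp
      then show "edist n2 (\<psi> u) (\<psi> v) = 1" using psid EHV[OF E] unfolding edist_def by simp
    next
      fix u v w assume H: "EH u v \<and> w \<in> VH \<and> w \<noteq> u \<and> w \<noteq> v"
      then have E: "EH u v" and w: "w \<in> VH" "w \<noteq> u" "w \<noteq> v" by auto
      have uv: "u \<in> VH" "v \<in> VH" using EHV[OF E] by auto
      show "\<psi> w \<notin> seg (\<psi> u) (\<psi> v)"
      proof
        assume "\<psi> w \<in> seg (\<psi> u) (\<psi> v)"
        then obtain t where t: "0 \<le> t" "t \<le> 1" "\<forall>i. \<psi> w i = (1-t) * \<psi> u i + t * \<psi> v i"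
          using seg_coord by blast
        define z where "z = (\<lambda>i. (1-t) * Y u i + t * Y v i)"
        have Hz: "HP z" unfolding z_def by (intro HPcomb HPY uv)
        have Pz: "P z j = (1-t) * P (Y u) j + t * P (Y v) j" for j
          unfolding P_def z_def by (rule ip_lin)
        have "(\<Sum>j<n2. (P (Y w) j - P z j)^2) = 0"
        proof (rule sum.neutral, intro ballI)
          fix j assume "j \<in> {..<n2}"
          then show "(P (Y w) j - P z j)^2 = 0"
            using t(3)[rule_format, of j] unfolding Pz \<psi>_def by simp
        qed
        then have "(\<Sum>i<n. (Y w i - z i)^2) = 0" using HPd[OF HPY[OF w(1)] Hz] by simp
        then have "Y w = z" using YR[OF w(1)] YR[OF uv(1)] YR[OF uv(2)]
          by (intro eqRn) (auto simp: Rn_def z_def)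
        then have "Y w \<in> seg (Y u) (Y v)" unfolding z_def by (intro seg_intro[OF t(1,2)]) simp
        moreover have "Y w \<notin> seg (Y u) (Y v)"
          unfolding Y_def using w E by (intro fS) (auto simp: gsum_V_def)
        ultimately show False by simp
      qed
    qed
  qed
  show ?thesis
    using n2pos m1pos m1n1 Lle r1p r1l r2p r2l rr sphG sphH unfolding n1_def
    by (intro exI[of _ "n - n2"] exI[of _ n2] exI[of _ r1] exI[of _ r2]) auto
qed


theorem mainTheorem4:
  fixes VG :: "'a set" and EG :: "'a \<Rightarrow> 'a \<Rightarrow> bool"
    and VH :: "'b set" and EH :: "'b \<Rightarrow> 'b \<Rightarrow> bool"
  assumes "simple_graph VG EG" and "simple_graph VH EH"
    and "card VG \<ge> 2" and "card VH \<ge> 2"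
  shows "(\<forall>n1 n2 (r1::real) r2.
            n1 \<ge> 1 \<and> n2 \<ge> 1 \<and> 0 < r1 \<and> r1 < 1 \<and> 0 < r2 \<and> r2 < 1 \<and> r1^2 + r2^2 = 1 \<and>
            spherical_embedding n1 r1 VG EG \<and> spherical_embedding n2 r2 VH EH \<longrightarrow>
            (\<exists>f. unit_distance_embedding (n1 + n2) (gsum_V VG VH) (gsum_E VG VH EG EH) f))
       \<and> (\<forall>n. (\<exists>f. unit_distance_embedding n (gsum_V VG VH) (gsum_E VG VH EG EH) f) \<longrightarrow>
            (\<exists>n1 n2 (r1::real) r2. n1 \<ge> 1 \<and> n2 \<ge> 1 \<and> n1 + n2 = n \<and>
               0 < r1 \<and> r1 < 1 \<and> 0 < r2 \<and> r2 < 1 \<and> r1^2 + r2^2 = 1 \<and>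
               spherical_embedding n1 r1 VG EG \<and> spherical_embedding n2 r2 VH EH))"
  proof (intro conjI allI impI)
  fix n1 n2 and r1 r2 :: real
  assume h: "n1 \<ge> 1 \<and> n2 \<ge> 1 \<and> 0 < r1 \<and> r1 < 1 \<and> 0 < r2 \<and> r2 < 1 \<and> r1^2 + r2^2 = 1 \<and>
            spherical_embedding n1 r1 VG EG \<and> spherical_embedding n2 r2 VH EH"
  show "\<exists>f. unit_distance_embedding (n1 + n2) (gsum_V VG VH) (gsum_E VG VH EG EH) f"
    using h by (intro part1[OF assms(1,2), where ?r1.0=r1 and ?r2.0=r2]) auto
next
  fix n assume "\<exists>f. unit_distance_embedding n (gsum_V VG VH) (gsum_E VG VH EG EH) f"
  then obtain f where "unit_distance_embedding n (gsum_V VG VH) (gsum_E VG VH EG EH) f" by blast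
  then show "\<exists>n1 n2 (r1::real) r2. n1 \<ge> 1 \<and> n2 \<ge> 1 \<and> n1 + n2 = n \<and>
               0 < r1 \<and> r1 < 1 \<and> 0 < r2 \<and> r2 < 1 \<and> r1^2 + r2^2 = 1 \<and>
               spherical_embedding n1 r1 VG EG \<and> spherical_embedding n2 r2 VH EH"
    by (rule part2[OF assms])
qed

end
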